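(* \[ \sum_{n=0}^\infty\frac{p(n)\,(-2^{24})^n}{(2n+1)^5(6n+1)^5(6n+5)^5\binom{6n}{3n}^5}=\frac{189}{2}\zeta(3), \] where \[ p(n)=491287680n^{12}+3517115904n^{11}+11399133888n^{10}+22100247360n^9+28522562400n^8+25791650640n^7 \] \[ +16738310448n^6+7846312104n^5+2633313600n^4+616193160n^3+95283770n^2+8729374n+357931. \]
   Context: $\zeta$ is the Riemann zeta function. *)

theory Defs
  imports "HOL-Analysis.Analysis"
begin

definition zeta :: "real \<Rightarrow> real" where
  "zeta s = (\<Sum>n. 1 / (real (Suc n)) powr s)"

definition p18 :: "nat \<Rightarrow> real" where
  "p18 n = (let x = real n in
     491287680*x^12 + 3517115904*x^11 + 11399133888*x^10 + 22100247360*x^9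
   + 28522562400*x^8 + 25791650640*x^7 + 16738310448*x^6 + 7846312104*x^5
   + 2633313600*x^4 + 616193160*x^3 + 95283770*x^2 + 8729374*x + 357931)"

end

theory Submission
  imports Defs
begin


definition rq :: "nat \<Rightarrow> nat \<Rightarrow> real" where
  "rq j k = pochhammer (1/2) k / pochhammer (real j + 3/2) k"
definition uu :: "nat \<Rightarrow> nat \<Rightarrow> real" where
  "uu j k = (real j + 1 + 2 * real k) * rq j k ^ 4"
definition AA :: "nat \<Rightarrow> real" where
  "AA j = 8*(real j+1)^5/((2*real j+1)*(2*real j+3)^4)"
definition gc :: "nat \<Rightarrow> nat \<Rightarrow> real" where
  "gc j k = (4*real k^2+(12*real j+8)*real k+(10*(real j+1)^2-6*(real j+1)+1))/(4*(2*real j+1))"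
definition GG :: "nat \<Rightarrow> nat \<Rightarrow> real" where
  "GG j k = - gc j k * rq j k ^ 4"

lemma rq_0 [simp]: "rq j 0 = 1" by (simp add: rq_def)

lemma rq_Suc_k: "rq j (Suc k) = rq j k * ((real k + 1/2)/(real j + 3/2 + real k))"
proof -
  have p: "pochhammer (real j + 3/2) k > 0" by (rule pochhammer_pos) simp
  have d: "real j + 3/2 + real k > 0" by simp
  show ?thesis unfolding rq_def pochhammer_rec' using p d
    by (simp add: field_simps)
qed

lemma aux_div: fixes h P P2 x y :: real
  assumes "x > 0" "x + y > 0" "P > 0" "x * P2 = (x+y) * P"
  shows "h / P2 = h / P * (x/(x+y))"
proof -
  have e: "P2 = (x+y)*P/x" using assms by (simp add: field_simps)
  show ?thesis unfolding e using assms by (simp add: field_simps)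
qed

lemma rq_Suc_j: "rq (Suc j) k = rq j k * ((real j + 3/2)/(real j + 3/2 + real k))"
proof -
  have p: "pochhammer (real j + 3/2) k > 0" by (rule pochhammer_pos) simp
  have e: "(real j + 3/2) * pochhammer (real j + 3/2 + 1) k = (real j + 3/2 + real k) * pochhammer (real j + 3/2) k"
    using pochhammer_rec[of "real j + 3/2" k] pochhammer_rec'[of "real j + 3/2" k] by simp
  have e2: "real (Suc j) + 3/2 = real j + 3/2 + 1" by simp
  show ?thesis unfolding rq_def e2
    by (rule aux_div[OF _ _ p e]) auto
qed

lemma rq_bounds: "0 \<le> rq j k \<and> rq j k \<le> 1/(2*real k+1)"
proof (induction k)
  case 0 then show ?case by simp
next
  case (Suc k)
  have f: "0 \<le> (real k + 1/2)/(real j + 3/2 + real k)" by simp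
  have f2: "(real k + 1/2)/(real j + 3/2 + real k) \<le> (2*real k+1)/(2*real k+3)"
    by (simp add: field_simps)
  have "rq j k * ((real k + 1/2)/(real j + 3/2 + real k)) \<le> 1/(2*real k+1) * ((2*real k+1)/(2*real k+3))"
    using Suc f f2 by (intro mult_mono) auto
  also have "\<dots> = 1/(2*real (Suc k)+1)" by (simp add: field_simps)
  finally show ?case using Suc f by (simp add: rq_Suc_k)
qed

lemma cert_rat:
  fixes x y :: real assumes x: "x \<ge> 0" and y: "y \<ge> 0"
  shows "(x+1+2*y) + 8*(x+1)^5/((2*x+1)*(2*x+3)^4) * ((x+2+2*y) * ((x+3/2)/(x+3/2+y))^4)
       = - ((4*(y+1)^2+(12*x+8)*(y+1)+(10*(x+1)^2-6*(x+1)+1))/(4*(2*x+1))) * ((y+1/2)/(x+3/2+y))^4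
         + (4*y^2+(12*x+8)*y+(10*(x+1)^2-6*(x+1)+1))/(4*(2*x+1))"
proof -
  obtain D where Dd: "D = 2*x+3+2*y" by blast
  obtain a where ad: "a = 2*x+1" by blast
  obtain b where bd: "b = 2*x+3" by blast
  have D: "D \<noteq> 0" "a \<noteq> 0" "b \<noteq> 0" using x y Dd ad bd by auto
  have e1: "(x+3/2)/(x+3/2+y) = b/D" using D Dd bd by (simp add: field_simps)
  have e2: "(y+1/2)/(x+3/2+y) = (2*y+1)/D" using D Dd by (simp add: field_simps)
  have "(x+1+2*y) + 8*(x+1)^5/(a*b^4) * ((x+2+2*y) * (b/D)^4)
       = - ((4*(y+1)^2+(12*x+8)*(y+1)+(10*(x+1)^2-6*(x+1)+1))/(4*a)) * ((2*y+1)/D)^4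
         + (4*y^2+(12*x+8)*y+(10*(x+1)^2-6*(x+1)+1))/(4*a)"
    using D apply (simp add: power_divide field_simps)
    unfolding Dd ad bd by algebra
  then show ?thesis unfolding e1 e2 ad bd .
qed

lemma cert: "uu j k + AA j * uu (Suc j) k = GG j (Suc k) - GG j k"
proof -
  let ?x = "real j" and ?y = "real k" and ?r = "rq j k"
  have c: "(?x+1+2*?y) + 8*(?x+1)^5/((2*?x+1)*(2*?x+3)^4) * ((?x+2+2*?y) * ((?x+3/2)/(?x+3/2+?y))^4)
       = - ((4*(?y+1)^2+(12*?x+8)*(?y+1)+(10*(?x+1)^2-6*(?x+1)+1))/(4*(2*?x+1))) * ((?y+1/2)/(?x+3/2+?y))^4
         + (4*?y^2+(12*?x+8)*?y+(10*(?x+1)^2-6*(?x+1)+1))/(4*(2*?x+1))"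
    by (rule cert_rat) auto
  have u2: "uu (Suc j) k = (?x+2+2*?y) * ?r^4 * ((?x+3/2)/(?x+3/2+?y))^4"
  proof -
    have "?x+3/2+?y > 0" by simp
    then show ?thesis unfolding uu_def rq_Suc_j apply (simp add: power_divide power_mult_distrib field_simps) by algebra
  qed
  obtain Q where Q: "Q = ((?x+3/2)/(?x+3/2+?y))^4" by blast
  obtain A where A: "A = 8*(?x+1)^5/((2*?x+1)*(2*?x+3)^4)" by blast
  have "uu j k + AA j * uu (Suc j) k = ?r^4 * ((?x+1+2*?y) + 8*(?x+1)^5/((2*?x+1)*(2*?x+3)^4) * ((?x+2+2*?y) * ((?x+3/2)/(?x+3/2+?y))^4))"
    unfolding u2 unfolding AA_def uu_def Q[symmetric] A[symmetric] by (simp add: algebra_simps)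
  also have "\<dots> = GG j (Suc k) - GG j k"
  proof -
    obtain Q2 where Q2: "Q2 = ((?y+1/2)/(?x+3/2+?y))^4" by blast
    obtain C1 where C1: "C1 = ((4*(?y+1)^2+(12*?x+8)*(?y+1)+(10*(?x+1)^2-6*(?x+1)+1))/(4*(2*?x+1)))" by blast
    obtain C0 where C0: "C0 = (4*?y^2+(12*?x+8)*?y+(10*(?x+1)^2-6*(?x+1)+1))/(4*(2*?x+1))" by blast
    have g1: "GG j (Suc k) = - C1 * ?r^4 * Q2" unfolding GG_def gc_def rq_Suc_k C1 Q2
      by (simp add: power_mult_distrib power_divide add.commute)
    have g0: "GG j k = - C0 * ?r^4" unfolding GG_def gc_def C0 by simp
    show ?thesis unfolding c g1 g0 C0[symmetric] C1[symmetric] Q2[symmetric] by (simp add: algebra_simps)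
  qed
  finally show ?thesis .
qed



definition WW :: "nat \<Rightarrow> real" where "WW j = suminf (uu j)"

lemma summable_cube: "summable (\<lambda>k. 1/(real (Suc k))^3)"
proof -
  have "summable (\<lambda>n. inverse (real n ^ 3))" by (rule inverse_power_summable) simp
  then have "summable (\<lambda>n. inverse (real (Suc n) ^ 3))" by (subst summable_Suc_iff)
  then show ?thesis by (simp add: inverse_eq_divide)
qed

lemma summable_odd: "summable (\<lambda>k. 1/(2*real k+1)^3)"
proof (rule summable_comparison_test'[OF summable_cube])
  fix n :: nat assume "n \<ge> 0"
  have "(real (Suc n))^3 \<le> (2*real n+1)^3" by (rule power_mono) auto
  then show "norm (1/(2*real n+1)^3) \<le> 1/(real (Suc n))^3"
    by (simp add: divide_simps)
qed

lemma uu_bounds: "0 \<le> uu j k \<and> uu j k \<le> (real j + 1) * (1/(2*real k+1)^3)"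
proof -
  have b: "0 \<le> rq j k" "rq j k \<le> 1/(2*real k+1)" using rq_bounds by auto
  have "rq j k ^ 4 \<le> (1/(2*real k+1))^4" using b by (intro power_mono) auto
  then have "uu j k \<le> (real j + 1 + 2 * real k) * (1/(2*real k+1))^4"
    unfolding uu_def by (intro mult_left_mono) auto
  also have "\<dots> \<le> (real j + 1) * (2*real k + 1) * (1/(2*real k+1))^4"
    by (intro mult_right_mono) (auto simp: algebra_simps)
  also have "\<dots> = (real j + 1) * (1/(2*real k+1)^3)"
    by (simp add: power_divide field_simps) algebra
  finally show ?thesis using b unfolding uu_def by auto
qed

lemma summable_uu: "summable (uu j)"
proof (rule summable_comparison_test'[OF summable_mult[OF summable_odd, of "real j + 1"]])
  fix n :: nat assume "n \<ge> 0"
  show "norm (uu j n) \<le> (real j + 1) * (1/(2*real n+1)^3)" using uu_bounds[of j n] by simp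
qed

lemma WW_bound: "0 \<le> WW j \<and> WW j \<le> (real j + 1) * suminf (\<lambda>k. 1/(2*real k+1)^3)"
proof -
  have "WW j \<le> suminf (\<lambda>k. (real j + 1) * (1/(2*real k+1)^3))"
    unfolding WW_def using uu_bounds summable_uu summable_mult[OF summable_odd]
    by (intro suminf_le) auto
  also have "\<dots> = (real j + 1) * suminf (\<lambda>k. 1/(2*real k+1)^3)"
    by (rule suminf_mult[OF summable_odd])
  finally show ?thesis unfolding WW_def using uu_bounds summable_uu
    by (auto intro: suminf_nonneg)
qed

lemma aux4: "d \<noteq> 0 \<Longrightarrow> M * d^2 * (1/d)^4 = M / (d:: real)^2"
  by (simp add: power_divide field_simps eval_nat_numeral)

lemma GG_lim: "GG j \<longlonglongrightarrow> 0"
proof (rule Lim_null_comparison)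
  define M where "M = (4 + (12*real j+8) + (10*(real j+1)^2-6*(real j+1)+1))/(4*(2*real j+1))"
  show "\<forall>\<^sub>F k in sequentially. norm (GG j k) \<le> M * inverse (real (Suc k))"
  proof (rule always_eventually, rule allI)
    fix k
    let ?y = "real k"
    have c0: "10*(real j+1)^2-6*(real j+1)+1 \<ge> 0"
    proof -
      have "6*(real j+1) \<le> 10*(real j+1)^2" by (simp add: power2_eq_square algebra_simps)
      then show ?thesis by simp
    qed
    have num: "0 \<le> 4*?y^2+(12*real j+8)*?y+(10*(real j+1)^2-6*(real j+1)+1)"
      using c0 by simp
    have num2: "4*?y^2+(12*real j+8)*?y+(10*(real j+1)^2-6*(real j+1)+1)
         \<le> (4 + (12*real j+8) + (10*(real j+1)^2-6*(real j+1)+1)) * (2*?y+1)^2"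
    proof -
      have a: "?y^2 \<le> (2*?y+1)^2" "?y \<le> (2*?y+1)^2" "1 \<le> (2*?y+1)^2"
        by (auto simp: power2_eq_square algebra_simps)
      have a1: "4*?y^2 \<le> 4*(2*?y+1)^2" using a by simp
      have a2: "(12*real j+8)*?y \<le> (12*real j+8)*(2*?y+1)^2" using a by (intro mult_left_mono) auto
      have a3: "(10*(real j+1)^2-6*(real j+1)+1) * 1 \<le> (10*(real j+1)^2-6*(real j+1)+1) * (2*?y+1)^2"
        using a c0 by (intro mult_left_mono) auto
      have "4*?y^2+(12*real j+8)*?y+(10*(real j+1)^2-6*(real j+1)+1) * 1
         \<le> 4*(2*?y+1)^2 + (12*real j+8)*(2*?y+1)^2 + (10*(real j+1)^2-6*(real j+1)+1) * (2*?y+1)^2"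
        using a1 a2 a3 by (intro add_mono) auto
      also have "\<dots> = (4 + (12*real j+8) + (10*(real j+1)^2-6*(real j+1)+1)) * (2*?y+1)^2"
        by (simp only: distrib_right)
      finally show ?thesis by simp
    qed
    have gc0: "0 \<le> gc j k" unfolding gc_def using num by simp
    have gc1: "gc j k \<le> M * (2*?y+1)^2" unfolding gc_def M_def using num2
      by (simp add: divide_simps)
    have b: "0 \<le> rq j k" "rq j k \<le> 1/(2*?y+1)" using rq_bounds by auto
    have r4: "rq j k ^ 4 \<le> (1/(2*?y+1))^4" using b by (intro power_mono) auto
    have "norm (GG j k) = gc j k * rq j k ^ 4" unfolding GG_def using gc0 b by simp
    also have "\<dots> \<le> M * (2*?y+1)^2 * (1/(2*?y+1))^4"
      using gc0 gc1 r4 b by (intro mult_mono) auto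
    also have "\<dots> = M / (2*?y+1)^2" by (rule aux4) simp
    also have "\<dots> \<le> M * inverse (real (Suc k))"
    proof -
      have M0: "M \<ge> 0" unfolding M_def using c0 by simp
      have "real (Suc k) \<le> (2*?y+1)^2" by (simp add: power2_eq_square algebra_simps)
      then have "1/(2*?y+1)^2 \<le> inverse (real (Suc k))" by (simp add: divide_simps)
      then show ?thesis using M0 by (metis mult_left_mono times_divide_eq_right mult.right_neutral)
    qed
    finally show "norm (GG j k) \<le> M * inverse (real (Suc k))" .
  qed
  show "(\<lambda>k. M * inverse (real (Suc k))) \<longlonglongrightarrow> 0"
    using tendsto_mult_right_zero[OF LIMSEQ_inverse_real_of_nat] by simp
qed

lemma WW_rel: "WW j + AA j * WW (Suc j) = gc j 0"
proof -
  have tel: "(\<Sum>k<K. uu j k + AA j * uu (Suc j) k) = GG j K - GG j 0" for K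
    unfolding cert by (rule sum_lessThan_telescope)
  have l1: "(\<lambda>K. \<Sum>k<K. uu j k + AA j * uu (Suc j) k) \<longlonglongrightarrow> WW j + AA j * WW (Suc j)"
  proof -
    have "(\<lambda>k. uu j k + AA j * uu (Suc j) k) sums (WW j + AA j * WW (Suc j))"
      unfolding WW_def by (intro sums_add sums_mult summable_sums summable_uu)
    then show ?thesis by (simp add: sums_def)
  qed
  have l2: "(\<lambda>K. \<Sum>k<K. uu j k + AA j * uu (Suc j) k) \<longlonglongrightarrow> 0 - GG j 0"
    unfolding tel by (intro tendsto_diff GG_lim tendsto_const)
  have "WW j + AA j * WW (Suc j) = 0 - GG j 0" using LIMSEQ_unique[OF l1 l2] .
  then show ?thesis unfolding GG_def by simp
qed





primrec cc :: "nat \<Rightarrow> real" where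
  "cc 0 = 1"
| "cc (Suc j) = - AA j * cc j"

lemma AA_bounds: "0 \<le> AA j \<and> AA j \<le> 1/2"
proof -
  let ?x = "real j"
  have p: "(2*?x+2)^4 \<le> (2*?x+3)^4" by (rule power_mono) auto
  have e: "(2*?x+2)^4 = 16*(?x+1)^4"
  proof -
    have "(2*?x+2)^4 = (2*(?x+1))^4" by (simp add: algebra_simps)
    also have "\<dots> = 16*(?x+1)^4" by (simp only: power_mult_distrib) simp
    finally show ?thesis .
  qed
  have "8*(?x+1)^5 = 8*(?x+1)^4*(?x+1)" by (simp add: power_Suc2[symmetric] mult.assoc)
  also have "\<dots> \<le> 8*(?x+1)^4*(2*?x+1)" by (intro mult_left_mono) auto
  also have "\<dots> = (1/2)*(2*?x+1)*(16*(?x+1)^4)" by simp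
  also have "\<dots> \<le> (1/2)*(2*?x+1)*(2*?x+3)^4" using p e by (intro mult_left_mono) auto
  finally have "8*(?x+1)^5 \<le> (1/2)*((2*?x+1)*(2*?x+3)^4)" by simp
  moreover have "(2*?x+1)*(2*?x+3)^4 > 0" by simp
  ultimately show ?thesis unfolding AA_def by (simp add: divide_simps)
qed

lemma cc_bound: "\<bar>cc j\<bar> \<le> (1/2)^j"
proof (induction j)
  case 0 then show ?case by simp
next
  case (Suc j)
  have "\<bar>cc (Suc j)\<bar> = AA j * \<bar>cc j\<bar>" using AA_bounds[of j] by (simp add: abs_mult)
  also have "\<dots> \<le> (1/2) * (1/2)^j" using AA_bounds[of j] Suc by (intro mult_mono) auto
  finally show ?case by simp
qed

definition VV :: "nat \<Rightarrow> real" where "VV j = cc j * WW j"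

lemma VV_step: "VV j - VV (Suc j) = cc j * gc j 0"
proof -
  have "cc j * (WW j + AA j * WW (Suc j)) = cc j * gc j 0" using WW_rel[of j] by simp
  then show ?thesis unfolding VV_def by (simp add: algebra_simps)
qed

lemma VV_lim: "VV \<longlonglongrightarrow> 0"
proof (rule Lim_null_comparison)
  define S where "S = suminf (\<lambda>k. 1/(2*real k+1)^3)"
  show "\<forall>\<^sub>F N in sequentially. norm (VV N) \<le> S * (real N * (1/2)^N + (1/2)^N)"
  proof (rule always_eventually, rule allI)
    fix N
    have w: "0 \<le> WW N" "WW N \<le> (real N + 1) * S" using WW_bound[of N] unfolding S_def by auto
    have "norm (VV N) = \<bar>cc N\<bar> * WW N" unfolding VV_def using w by (simp add: abs_mult)
    also have "\<dots> \<le> (1/2)^N * ((real N + 1) * S)" using w cc_bound[of N] by (intro mult_mono) auto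
    also have "\<dots> = S * (real N * (1/2)^N + (1/2)^N)" by (simp add: algebra_simps)
    finally show "norm (VV N) \<le> S * (real N * (1/2)^N + (1/2)^N)" .
  qed
  have "(\<lambda>N. real N * (1/2::real)^N) \<longlonglongrightarrow> 0" by (rule powser_times_n_limit_0) simp
  moreover have "(\<lambda>N. (1/2::real)^N) \<longlonglongrightarrow> 0" by (rule LIMSEQ_power_zero) simp
  ultimately show "(\<lambda>N. S * (real N * (1/2)^N + (1/2)^N)) \<longlonglongrightarrow> 0"
    using tendsto_mult_right_zero tendsto_add_zero by blast
qed

lemma series1: "(\<lambda>j. cc j * gc j 0) sums WW 0"
proof -
  have "(\<lambda>N. \<Sum>j<N. cc j * gc j 0) = (\<lambda>N. VV 0 - VV N)"
    by (simp add: VV_step[symmetric] sum_lessThan_telescope')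
  moreover have "(\<lambda>N. VV 0 - VV N) \<longlonglongrightarrow> VV 0 - 0" by (intro tendsto_diff tendsto_const VV_lim)
  ultimately show ?thesis unfolding sums_def VV_def by simp
qed

lemma rq0: "rq 0 k = 1/(2*real k+1)"
proof (induction k)
  case 0 then show ?case by simp
next
  case (Suc k)
  have y: "real k \<ge> 0" by simp
  have a: "(real k+1/2)/(real 0+3/2+real k) = (2*real k+1)/(2*real k+3)" using y by (simp add: field_simps)
  show ?case unfolding rq_Suc_k Suc.IH a using y by (simp add: field_simps)
qed

lemma WW0: "WW 0 = suminf (\<lambda>k. 1/(2*real k+1)^3)"
proof -
  have "uu 0 k = 1/(2*real k+1)^3" for k
  proof -
    have "uu 0 k = (2*real k+1) * (1/(2*real k+1))^4" unfolding uu_def rq0 by (simp add: algebra_simps)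
    also have "\<dots> = 1/(2*real k+1)^3" by (simp add: power_divide field_simps) algebra
    finally show ?thesis .
  qed
  then have "uu 0 = (\<lambda>k. 1/(2*real k+1)^3)" by auto
  then show ?thesis unfolding WW_def by simp
qed

lemma odd_zeta: "(\<lambda>k. 1/(2*real k+1)^3) sums (7/8 * zeta 3)"
proof -
  define f where "f = (\<lambda>n. 1/(real (Suc n))^3)"
  have z: "zeta 3 = suminf f"
  proof -
    have "1 / (real (Suc n)) powr 3 = f n" for n
      using powr_realpow[of "real (Suc n)" 3] unfolding f_def by simp
    then show ?thesis unfolding zeta_def by simp
  qed
  have fs: "f sums zeta 3" unfolding z f_def using summable_cube by (simp add: summable_sums)
  have g: "(\<lambda>n. sum f {n*2..<n*2+2}) sums zeta 3" by (rule sums_group[OF fs]) simp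
  have e: "sum f {n*2..<n*2+2} = 1/(2*real n+1)^3 + (1/8) * f n" for n
  proof -
    have "sum f {n*2..<n*2+2} = f (2*n) + f (2*n+1)" by (simp add: numeral_2_eq_2 mult.commute)
    moreover have "f (2*n) = 1/(2*real n+1)^3" unfolding f_def by (simp add: add.commute)
    moreover have "f (2*n+1) = (1/8) * f n" unfolding f_def
      by (simp add: power_divide field_simps) algebra
    ultimately show ?thesis by simp
  qed
  have h: "(\<lambda>n. (1/8) * f n) sums ((1/8) * zeta 3)" by (rule sums_mult[OF fs])
  have "(\<lambda>n. sum f {n*2..<n*2+2} - (1/8) * f n) sums (zeta 3 - (1/8) * zeta 3)"
    by (rule sums_diff[OF g h])
  then show ?thesis unfolding e by simp
qed

lemma series2: "(\<lambda>j. cc j * gc j 0) sums (7/8 * zeta 3)"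
proof -
  have eq: "WW 0 = 7/8 * zeta 3" unfolding WW0 using odd_zeta by (simp add: sums_iff)
  from series1 show ?thesis unfolding eq .
qed



lemma binom_step:
  "real ((6*Suc m) choose (3*Suc m)) * ((3*real m+1)*(3*real m+2)*(3*real m+3))
     = 8*(6*real m+1)*(6*real m+3)*(6*real m+5)*real ((6*m) choose (3*m))"
proof -
  let ?x = "real m"
  have e1: "6*Suc m = Suc(Suc(Suc(Suc(Suc(Suc(6*m))))))" by simp
  have e2: "3*Suc m = Suc(Suc(Suc(3*m)))" by simp
  have b1: "real ((6*Suc m) choose (3*Suc m)) = fact (6*Suc m)/(fact (3*Suc m)*fact (3*Suc m))"
  proof -
    have d: "6*Suc m - 3*Suc m = 3*Suc m" by simp
    show ?thesis using binomial_fact[of "3*Suc m" "6*Suc m"] unfolding d by simp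
  qed
  have b0: "real ((6*m) choose (3*m)) = fact (6*m)/(fact (3*m)*fact (3*m))"
  proof -
    have d: "6*m - 3*m = 3*m" by simp
    show ?thesis using binomial_fact[of "3*m" "6*m"] unfolding d by simp
  qed
  have f6: "(fact (6*Suc m)::real) = (6*?x+1)*(2*(3*?x+1))*(6*?x+3)*(2*(3*?x+2))*(6*?x+5)*(2*(3*?x+3))*fact (6*m)"
    unfolding e1 by (simp add: fact_Suc algebra_simps)
  have f3: "(fact (3*Suc m)::real) = (3*?x+1)*(3*?x+2)*(3*?x+3)*fact (3*m)"
    unfolding e2 by (simp add: fact_Suc algebra_simps)
  have gen: "(a1*(2*q1)*a3*(2*q2)*a5*(2*q3)*F6)/((q1*q2*q3*F3)*(q1*q2*q3*F3)) * (q1*q2*q3)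
      = 8*a1*a3*a5*(F6/(F3*F3))"
    if "q1 \<noteq> 0" "q2 \<noteq> 0" "q3 \<noteq> 0" "F3 \<noteq> 0" for a1 a3 a5 q1 q2 q3 F3 F6 :: real
    using that by (simp add: field_simps)
  show ?thesis unfolding b1 b0 f6 f3
    by (rule gen) auto
qed

lemma AA_3: "AA (3*m) = 8*(3*real m+1)^5/((6*real m+1)*(6*real m+3)^4)"
  "AA (Suc (3*m)) = 8*(3*real m+2)^5/((6*real m+3)*(6*real m+5)^4)"
  "AA (Suc (Suc (3*m))) = 8*(3*real m+3)^5/((6*real m+5)*(6*real m+7)^4)"
  unfolding AA_def by (simp_all add: algebra_simps)

lemma cc_3: "cc (3*m) = (-(2^24))^m / ((6*real m+1)^4 * real ((6*m) choose (3*m))^5)"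
proof (induction m)
  case 0 then show ?case by simp
next
  case (Suc m)
  let ?x = "real m"
  have e: "3*Suc m = Suc(Suc(Suc(3*m)))" by simp
  have c: "cc (3*Suc m) = (- AA (Suc (Suc (3*m)))) * ((- AA (Suc (3*m))) * ((- AA (3*m)) * cc (3*m)))"
    unfolding e by simp
  obtain B where B: "B = real ((6*m) choose (3*m))" by blast
  obtain B' where B': "B' = real ((6*Suc m) choose (3*Suc m))" by blast
  obtain E where E: "E = (- ((2::real) ^ 24)) ^ m" by blast
  obtain a1 where a1: "a1 = 6*?x+1" by blast
  obtain a3 where a3: "a3 = 6*?x+3" by blast
  obtain a5 where a5: "a5 = 6*?x+5" by blast
  obtain a7 where a7: "a7 = 6*?x+7" by blast
  obtain p1 where p1: "p1 = 3*?x+1" by blast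
  obtain p2 where p2: "p2 = 3*?x+2" by blast
  obtain p3 where p3: "p3 = 3*?x+3" by blast
  have Bpos: "B > 0" unfolding B by simp
  have bs: "B' * (p1*p2*p3) = 8*a1*a3*a5*B" unfolding B B' p1 p2 p3 a1 a3 a5 by (rule binom_step)
  have nz: "a1 \<noteq> 0" "a3 \<noteq> 0" "a5 \<noteq> 0" "a7 \<noteq> 0" "p1 \<noteq> 0" "p2 \<noteq> 0" "p3 \<noteq> 0" "B \<noteq> 0"
    using a1 a3 a5 a7 p1 p2 p3 Bpos by auto
  have B'e: "B' = 8*a1*a3*a5*B/(p1*p2*p3)" using bs nz by (simp add: field_simps)
  have "cc (3*Suc m) = (-(8*p3^5/(a5*a7^4))) * ((-(8*p2^5/(a3*a5^4))) * ((-(8*p1^5/(a1*a3^4))) * (E/(a1^4*B^5))))"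
    unfolding c AA_3 Suc.IH a1 a3 a5 a7 p1 p2 p3 E B ..
  also have "\<dots> = (-(2^24)) * E / (a7^4 * B'^5)"
    unfolding B'e using nz by (simp add: field_simps) algebra
  also have "\<dots> = (-(2^24))^Suc m / ((6*real (Suc m)+1)^4 * real ((6*Suc m) choose (3*Suc m))^5)"
    unfolding E a7 B' by (simp add: algebra_simps)
  finally show ?case .
qed

lemma polyid: fixes x :: real shows
  "9*(491287680*x^12 + 3517115904*x^11 + 11399133888*x^10 + 22100247360*x^9
   + 28522562400*x^8 + 25791650640*x^7 + 16738310448*x^6 + 7846312104*x^5
   + 2633313600*x^4 + 616193160*x^3 + 95283770*x^2 + 8729374*x + 357931)
   = (10*(3*x+1)^2-6*(3*x+1)+1)*(6*x+3)^5*(6*x+5)^5 - 8*(3*x+1)^5*(10*(3*x+2)^2-6*(3*x+2)+1)*(6*x+5)^5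
     + 64*(3*x+1)^5*(3*x+2)^5*(10*(3*x+3)^2-6*(3*x+3)+1)"
  by algebra

lemma atoms: fixes P E B G0 G1 G2 a1 a3 a5 b q1 q2 :: real
  assumes H: "9*P = G0*a3^5*a5^5 - 8*q1^5*G1*a5^5 + 64*q1^5*q2^5*G2"
  and ab: "a3 = 3*b" and nz: "a1 \<noteq> 0" "a5 \<noteq> 0" "b \<noteq> 0" "B \<noteq> 0"
  shows "P*E/(b^5*a1^5*a5^5*B^5) = 108*( E/(a1^4*B^5)*(G0/(4*a1))
     + (-(8*q1^5/(a1*a3^4)))*(E/(a1^4*B^5))*(G1/(4*a3))
     + (8*q2^5/(a3*a5^4))*(8*q1^5/(a1*a3^4))*(E/(a1^4*B^5))*(G2/(4*a5)))"
proof -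
  have P: "P = (G0*a3^5*a5^5 - 8*q1^5*G1*a5^5 + 64*q1^5*q2^5*G2)/9" using H by simp
  show ?thesis unfolding P ab using nz by (simp add: field_simps) algebra
qed

lemma term_eq: "p18 m * (- ((2::real) ^ 24)) ^ m /
           ((2 * real m + 1) ^ 5 * (6 * real m + 1) ^ 5 * (6 * real m + 5) ^ 5
            * real ((6 * m) choose (3 * m)) ^ 5)
   = 108 * (\<Sum>j\<in>{m*3..<m*3+3}. cc j * gc j 0)"
proof -
  let ?x = "real m"
  have s: "(\<Sum>j\<in>{m*3..<m*3+3}. cc j * gc j 0) = cc (3*m) * gc (3*m) 0 + cc (Suc (3*m)) * gc (Suc (3*m)) 0 + cc (Suc (Suc (3*m))) * gc (Suc (Suc (3*m))) 0"
    by (simp add: eval_nat_numeral mult.commute)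
  have g: "gc (3*m) 0 = (10*(3*?x+1)^2-6*(3*?x+1)+1)/(4*(6*?x+1))"
    "gc (Suc (3*m)) 0 = (10*(3*?x+2)^2-6*(3*?x+2)+1)/(4*(6*?x+3))"
    "gc (Suc (Suc (3*m))) 0 = (10*(3*?x+3)^2-6*(3*?x+3)+1)/(4*(6*?x+5))"
    unfolding gc_def by (simp_all add: algebra_simps)
  have c: "cc (Suc (3*m)) = - AA (3*m) * cc (3*m)" "cc (Suc (Suc (3*m))) = - AA (Suc (3*m)) * (- AA (3*m) * cc (3*m))"
    by simp_all
  have B: "real ((6*m) choose (3*m)) \<noteq> 0" by simp
  have "p18 m * (- ((2::real) ^ 24)) ^ m /
           ((2 * ?x + 1) ^ 5 * (6 * ?x + 1) ^ 5 * (6 * ?x + 5) ^ 5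
            * real ((6 * m) choose (3 * m)) ^ 5)
      = 108*( ((-(2^24))^m / ((6*?x+1)^4 * real ((6*m) choose (3*m))^5))*((10*(3*?x+1)^2-6*(3*?x+1)+1)/(4*(6*?x+1)))
     + (-(8*(3*?x+1)^5/((6*?x+1)*(6*?x+3)^4)))*((-(2^24))^m / ((6*?x+1)^4 * real ((6*m) choose (3*m))^5))*((10*(3*?x+2)^2-6*(3*?x+2)+1)/(4*(6*?x+3)))
     + (8*(3*?x+2)^5/((6*?x+3)*(6*?x+5)^4))*(8*(3*?x+1)^5/((6*?x+1)*(6*?x+3)^4))*((-(2^24))^m / ((6*?x+1)^4 * real ((6*m) choose (3*m))^5))*((10*(3*?x+3)^2-6*(3*?x+3)+1)/(4*(6*?x+5))))"
    unfolding p18_def Let_def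
    by (rule atoms[OF polyid]) (use B in auto)
  also have "\<dots> = 108 * (\<Sum>j\<in>{m*3..<m*3+3}. cc j * gc j 0)"
    unfolding s g c AA_3 cc_3 by (simp add: algebra_simps)
  finally show ?thesis .
qed


theorem mainTheorem18:
  shows "(\<lambda>n. p18 n * (- ((2::real) ^ 24)) ^ n /
           ((2 * real n + 1) ^ 5 * (6 * real n + 1) ^ 5 * (6 * real n + 5) ^ 5
            * real ((6 * n) choose (3 * n)) ^ 5))
         sums (189 / 2 * zeta 3)"
proof -
  have g: "(\<lambda>m. \<Sum>j\<in>{m*3..<m*3+3}. cc j * gc j 0) sums (7/8 * zeta 3)"
    by (rule sums_group[OF series2]) simp
  have "(\<lambda>m. 108 * (\<Sum>j\<in>{m*3..<m*3+3}. cc j * gc j 0)) sums (108 * (7/8 * zeta 3))"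
    by (rule sums_mult[OF g])
  moreover have "108 * (7/8 * zeta 3) = 189 / 2 * zeta 3" by simp
  ultimately show ?thesis unfolding term_eq[symmetric] by simp
qed

end
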